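(* Let $(V,Y_1,\mathbf 1,T_1)$ be a vertex algebra (in dimension 1) equipped with an action of $\mathfrak c_D$ such that the generator $T_1\in\mathfrak c_D$ acts as the translation operator of $V$. If the action of $\mathfrak c_D$ is local and $\mathfrak c_D\mathbf 1=0$, then for all $a\in V$ and $2\le\alpha,\beta\le D$: $$[T_\alpha,Y_1(a,x)]=Y_1(T_\alpha a,x),\qquad [H,Y_1(a,x)]=Y_1(Ha,x)+x\partial_xY_1(a,x),$$ $$[\Omega_{\alpha\beta},Y_1(a,x)]=Y_1(\Omega_{\alpha\beta}a,x),\qquad [\Omega_{1\alpha},Y_1(a,x)]=Y_1(\Omega_{1\alpha}a,x)+xY_1(T_\alpha a,x),$$ $$[C_\alpha,Y_1(a,x)]=Y_1(C_\alpha a,x)+2xY_1(\Omega_{1\alpha}a,x)+x^2Y_1(T_\alpha a,x),$$ $$[C_1,Y_1(a,x)]=Y_1(C_1a,x)-2xY_1(Ha,x)-x^2\partial_xY_1(a,x).$$ Conversely, if these commutation relations hold for all $a\in V$, then the action of $\mathfrak c_D$ is local and annihilates the vacuum.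
   Context: A vertex algebra (in dimension 1) is a complex superspace $V$ with even vacuum $\mathbf 1$, even map $a\otimes b\mapsto Y_1(a,x)b\in V(\!(x)\!)$, and even $T_1$ with $T_1\mathbf 1=0$, $Y_1(\mathbf 1,x)=\mathrm{id}$, $Y_1(a,x)\mathbf 1\in V[\![x]\!]$ with value $a$ at $x=0$, $[T_1,Y_1(a,x)]=\partial_xY_1(a,x)$, and locality: $(x-y)^{N}[Y_1(a,x),Y_1(b,y)]=0$ for some $N=N_{a,b}$ (supercommutator). An operator $X\in\operatorname{End}V$ is local if for all $a,b$ there is $N$ with $(x-y)^N[[X,Y_1(a,x)],Y_1(b,y)]=0$; the action of $\mathfrak c_D$ is local if every element acts as a local operator. $\mathfrak c_D$ is the Lie algebra spanned by $T_\alpha$, $H$, $\Omega_{\alpha\beta}=-\Omega_{\beta\alpha}$, $C_\alpha$ ($1\le\alpha,\beta\le D$) with relations: $[H,\Omega_{\alpha\beta}]=[T_\alpha,T_\beta]=[C_\alpha,C_\beta]=0$; $[\Omega_{\alpha\beta},T_\gamma]=\delta_{\alpha\gamma}T_\beta-\delta_{\beta\gamma}T_\alpha$; $[\Omega_{\alpha\beta},C_\gamma]=\delta_{\alpha\gamma}C_\beta-\delta_{\beta\gamma}C_\alpha$; $[H,T_\alpha]=T_\alpha$; $[H,C_\alpha]=-C_\alpha$; $[T_\alpha,C_\beta]=2\delta_{\alpha\beta}H-2\Omega_{\alpha\beta}$; $[\Omega_{\alpha_1\beta_1},\Omega_{\alpha_2\beta_2}]=\delta_{\alpha_1\alpha_2}\Omega_{\beta_1\beta_2}+\delta_{\beta_1\beta_2}\Omega_{\alpha_1\alpha_2}-\delta_{\alpha_1\beta_2}\Omega_{\beta_1\alpha_2}-\delta_{\beta_1\alpha_2}\Omega_{\alpha_1\beta_2}$.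 It acts on $V$ by even operators. *)

theory Defs
  imports Complex_Main
begin

text \<open>
  The super structure V = V0 + V1 is encoded by the
  linear parity involution P (P a = a on V0, P a = -a on V1).
  A formal series in x with coefficients in End V is a function int => ('v => 'v):
  Yc a n is the coefficient of x^n in Y_1(a,x).  Identities of formal series are
  stated coefficientwise.
\<close>

text \<open>Ordinary commutator of operators (used for even operators X).\<close>
definition sop_comm :: "('v \<Rightarrow> 'v) \<Rightarrow> ('v \<Rightarrow> 'v) \<Rightarrow> ('v \<Rightarrow> 'v::ab_group_add)" where
  "sop_comm X Z = (\<lambda>v. X (Z v) - Z (X v))"

text \<open>a is homogeneous of parity p (p = True means odd).\<close>
definition homog :: "('v \<Rightarrow> 'v) \<Rightarrow> 'v::ab_group_add \<Rightarrow> bool \<Rightarrow> bool" where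
  "homog P a p \<longleftrightarrow> P a = (if p then - a else a)"

definition even_op :: "('v \<Rightarrow> 'v) \<Rightarrow> ('v \<Rightarrow> 'v) \<Rightarrow> bool" where
  "even_op P X \<longleftrightarrow> (\<forall>v. X (P v) = P (X v))"

definition super_sign :: "bool \<Rightarrow> bool \<Rightarrow> complex" where
  "super_sign pa pb = (if pa \<and> pb then -1 else 1)"

text \<open>Coefficient of x^m y^n in (x-y)^N F(x,y), where the two-variable series
  F has coefficient F p q at x^p y^q.\<close>
definition mult_xy_pow ::
  "(complex \<Rightarrow> 'v \<Rightarrow> 'v::ab_group_add) \<Rightarrow> nat \<Rightarrow> (int \<Rightarrow> int \<Rightarrow> 'v \<Rightarrow> 'v) \<Rightarrow> int \<Rightarrow> int \<Rightarrow> 'v \<Rightarrow> 'v" where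
  "mult_xy_pow sc N F m n c =
     (\<Sum>k\<le>N. sc (of_nat (N choose k) * (-1) ^ k) (F (m - int (N - k)) (n - int k) c))"

definition local_fields ::
  "(complex \<Rightarrow> 'v \<Rightarrow> 'v::ab_group_add) \<Rightarrow> ('v \<Rightarrow> 'v) \<Rightarrow> ('v \<Rightarrow> int \<Rightarrow> 'v \<Rightarrow> 'v) \<Rightarrow> bool" where
  "local_fields sc P Yc \<longleftrightarrow>
     (\<forall>a b pa pb. homog P a pa \<longrightarrow> homog P b pb \<longrightarrow>
        (\<exists>N. \<forall>m n c. mult_xy_pow sc N
            (\<lambda>p q v. Yc a p (Yc b q v) - sc (super_sign pa pb) (Yc b q (Yc a p v))) m n c = 0))"

text \<open>An (even) operator X is local: (x-y)^N [[X,Y(a,x)],Y(b,y)] = 0 for all a, b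
  (homogeneous; the inner bracket is an ordinary commutator since X is even).\<close>
definition local_op ::
  "(complex \<Rightarrow> 'v \<Rightarrow> 'v::ab_group_add) \<Rightarrow> ('v \<Rightarrow> 'v) \<Rightarrow> ('v \<Rightarrow> int \<Rightarrow> 'v \<Rightarrow> 'v) \<Rightarrow> ('v \<Rightarrow> 'v) \<Rightarrow> bool" where
  "local_op sc P Yc X \<longleftrightarrow>
     (\<forall>a b pa pb. homog P a pa \<longrightarrow> homog P b pb \<longrightarrow>
        (\<exists>N. \<forall>m n c. mult_xy_pow sc N
            (\<lambda>p q v. sop_comm X (Yc a p) (Yc b q v)
                      - sc (super_sign pa pb) (Yc b q (sop_comm X (Yc a p) v))) m n c = 0))"

definition vertex_algebra ::
  "(complex \<Rightarrow> 'v \<Rightarrow> 'v::ab_group_add) \<Rightarrow> ('v \<Rightarrow> 'v) \<Rightarrow> ('v \<Rightarrow> int \<Rightarrow> 'v \<Rightarrow> 'v) \<Rightarrow> 'v \<Rightarrow> ('v \<Rightarrow> 'v) \<Rightarrow> bool" where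
  "vertex_algebra sc P Yc vac T \<longleftrightarrow>
     vector_space sc \<and>
     Vector_Spaces.linear sc sc P \<and> (\<forall>v. P (P v) = v) \<and>
     P vac = vac \<and>
     (\<forall>a n. Vector_Spaces.linear sc sc (Yc a n)) \<and>
     (\<forall>n b. Vector_Spaces.linear sc sc (\<lambda>a. Yc a n b)) \<and>
     (\<forall>a n b. Yc (P a) n (P b) = P (Yc a n b)) \<and>
     (\<forall>a b. \<exists>N. \<forall>n<N. Yc a n b = 0) \<and>
     Vector_Spaces.linear sc sc T \<and> even_op P T \<and>
     T vac = 0 \<and>
     (\<forall>n b. Yc vac n b = (if n = 0 then b else 0)) \<and>
     (\<forall>a n. n < 0 \<longrightarrow> Yc a n vac = 0) \<and>
     (\<forall>a. Yc a 0 vac = a) \<and>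
     (\<forall>a n b. sop_comm T (Yc a n) b = sc (of_int (n + 1)) (Yc a (n + 1) b)) \<and>
     local_fields sc P Yc"

definition cD_action ::
  "(complex \<Rightarrow> 'v \<Rightarrow> 'v::ab_group_add) \<Rightarrow> ('v \<Rightarrow> 'v) \<Rightarrow> nat \<Rightarrow> (nat \<Rightarrow> 'v \<Rightarrow> 'v) \<Rightarrow> ('v \<Rightarrow> 'v)
    \<Rightarrow> (nat \<Rightarrow> nat \<Rightarrow> 'v \<Rightarrow> 'v) \<Rightarrow> (nat \<Rightarrow> 'v \<Rightarrow> 'v) \<Rightarrow> bool" where
  "cD_action sc P D Tr H Om C \<longleftrightarrow>
     Vector_Spaces.linear sc sc H \<and> even_op P H \<and>
     (\<forall>\<alpha>\<in>{1..D}. Vector_Spaces.linear sc sc (Tr \<alpha>) \<and> even_op P (Tr \<alpha>) \<and>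
                  Vector_Spaces.linear sc sc (C \<alpha>) \<and> even_op P (C \<alpha>)) \<and>
     (\<forall>\<alpha>\<in>{1..D}. \<forall>\<beta>\<in>{1..D}. Vector_Spaces.linear sc sc (Om \<alpha> \<beta>) \<and> even_op P (Om \<alpha> \<beta>) \<and>
        (\<forall>v. Om \<alpha> \<beta> v = - Om \<beta> \<alpha> v)) \<and>
     (\<forall>\<alpha>\<in>{1..D}. \<forall>\<beta>\<in>{1..D}.
        (\<forall>v. sop_comm H (Om \<alpha> \<beta>) v = 0) \<and>
        (\<forall>v. sop_comm (Tr \<alpha>) (Tr \<beta>) v = 0) \<and>
        (\<forall>v. sop_comm (C \<alpha>) (C \<beta>) v = 0) \<and>
        (\<forall>\<gamma>\<in>{1..D}. \<forall>v. sop_comm (Om \<alpha> \<beta>) (Tr \<gamma>) v =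
            (if \<alpha> = \<gamma> then Tr \<beta> v else 0) - (if \<beta> = \<gamma> then Tr \<alpha> v else 0)) \<and>
        (\<forall>\<gamma>\<in>{1..D}. \<forall>v. sop_comm (Om \<alpha> \<beta>) (C \<gamma>) v =
            (if \<alpha> = \<gamma> then C \<beta> v else 0) - (if \<beta> = \<gamma> then C \<alpha> v else 0)) \<and>
        (\<forall>v. sop_comm (Tr \<alpha>) (C \<beta>) v = sc 2 ((if \<alpha> = \<beta> then H v else 0) - Om \<alpha> \<beta> v))) \<and>
     (\<forall>\<alpha>\<in>{1..D}. (\<forall>v. sop_comm H (Tr \<alpha>) v = Tr \<alpha> v) \<and>
                  (\<forall>v. sop_comm H (C \<alpha>) v = - C \<alpha> v)) \<and>
     (\<forall>\<alpha>1\<in>{1..D}. \<forall>\<beta>1\<in>{1..D}. \<forall>\<alpha>2\<in>{1..D}. \<forall>\<beta>2\<in>{1..D}. \<forall>v.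
        sop_comm (Om \<alpha>1 \<beta>1) (Om \<alpha>2 \<beta>2) v =
          (if \<alpha>1 = \<alpha>2 then Om \<beta>1 \<beta>2 v else 0) + (if \<beta>1 = \<beta>2 then Om \<alpha>1 \<alpha>2 v else 0)
          - (if \<alpha>1 = \<beta>2 then Om \<beta>1 \<alpha>2 v else 0) - (if \<beta>1 = \<alpha>2 then Om \<alpha>1 \<beta>2 v else 0))"

text \<open>The operators by which the elements of c_D (complex linear combinations of the
  generators) act.\<close>
definition cD_ops ::
  "(complex \<Rightarrow> 'v \<Rightarrow> 'v::ab_group_add) \<Rightarrow> nat \<Rightarrow> (nat \<Rightarrow> 'v \<Rightarrow> 'v) \<Rightarrow> ('v \<Rightarrow> 'v)
    \<Rightarrow> (nat \<Rightarrow> nat \<Rightarrow> 'v \<Rightarrow> 'v) \<Rightarrow> (nat \<Rightarrow> 'v \<Rightarrow> 'v) \<Rightarrow> ('v \<Rightarrow> 'v) set" where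
  "cD_ops sc D Tr H Om C =
     {X. \<exists>t h w c. \<forall>v. X v =
        (\<Sum>\<alpha>\<in>{1..D}. sc (t \<alpha>) (Tr \<alpha> v)) + sc h (H v)
        + (\<Sum>\<alpha>\<in>{1..D}. \<Sum>\<beta>\<in>{1..D}. sc (w \<alpha> \<beta>) (Om \<alpha> \<beta> v))
        + (\<Sum>\<alpha>\<in>{1..D}. sc (c \<alpha>) (C \<alpha> v))}"

end

theory Submission imports Defs begin


declare One_nat_def [simp del]

lemma lin_add: "Vector_Spaces.linear s s f \<Longrightarrow> f (x + y) = f x + f y"
  by (simp add: linear_iff_module_hom module_hom.add)
lemma lin_scale: "Vector_Spaces.linear s s f \<Longrightarrow> f (s c x) = s c (f x)"
  by (simp add: linear_iff_module_hom module_hom.scale)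
lemma lin_0: "Vector_Spaces.linear s s f \<Longrightarrow> f 0 = 0"
  by (simp add: linear_iff_module_hom module_hom.zero)
lemma lin_diff: "Vector_Spaces.linear s s f \<Longrightarrow> f (x - y) = f x - f y"
  by (simp add: linear_iff_module_hom module_hom.diff)
lemma lin_neg: "Vector_Spaces.linear s s f \<Longrightarrow> f (- x) = - f x"
  by (simp add: linear_iff_module_hom module_hom.neg)
lemma lin_sum: "Vector_Spaces.linear s s f \<Longrightarrow> f (sum g A) = (\<Sum>a\<in>A. f (g a))"
  by (simp add: linear_iff_module_hom module_hom.sum)

definition fcomm :: "(complex \<Rightarrow> 'v \<Rightarrow> 'v::ab_group_add) \<Rightarrow> ('v \<Rightarrow> int \<Rightarrow> 'v \<Rightarrow> 'v) \<Rightarrow> 'v \<Rightarrow> complex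
   \<Rightarrow> (int \<Rightarrow> 'v \<Rightarrow> 'v) \<Rightarrow> int \<Rightarrow> int \<Rightarrow> 'v \<Rightarrow> 'v" where
  "fcomm sc Yc b s F = (\<lambda>p q v. F p (Yc b q v) - sc s (Yc b q (F p v)))"

definition good :: "(complex \<Rightarrow> 'v \<Rightarrow> 'v::ab_group_add) \<Rightarrow> ('v \<Rightarrow> int \<Rightarrow> 'v \<Rightarrow> 'v) \<Rightarrow> 'v \<Rightarrow> complex
   \<Rightarrow> (int \<Rightarrow> 'v \<Rightarrow> 'v) \<Rightarrow> bool" where
  "good sc Yc b s F \<longleftrightarrow> (\<exists>N. \<forall>m n c. mult_xy_pow sc N (fcomm sc Yc b s F) m n c = 0)"

locale cvs =
  fixes sc :: "complex \<Rightarrow> 'v::ab_group_add \<Rightarrow> 'v"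
  assumes vs: "vector_space sc"
begin
sublocale vector_space sc by (rule vs)


lemma sc2: "sc 2 x = x + x"
  using scale_left_distrib[of 1 1 x] by (simp add: one_add_one)
lemma sc2r: "sc (c * 2) x = sc c x + sc c x"
  by (metis scale_scale sc2 scale_right_distrib)
lemma sc2l: "sc (2 * c) x = sc c x + sc c x"
  by (metis mult.commute sc2r)

lemma mult_alt: "mult_xy_pow sc N G m n c =
   (\<Sum>k\<le>N. sc (of_nat (N choose k) * (-1) ^ k) (G (m - int N + int k) (n - int k) c))"
  unfolding mult_xy_pow_def
  by (rule sum.cong) (auto simp: of_nat_diff algebra_simps)

lemma mult_add: "mult_xy_pow sc N (\<lambda>p q v. G1 p q v + G2 p q v) m n c =
   mult_xy_pow sc N G1 m n c + mult_xy_pow sc N G2 m n c"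
  unfolding mult_xy_pow_def by (simp add: scale_right_distrib sum.distrib)

lemma mult_diff: "mult_xy_pow sc N (\<lambda>p q v. G1 p q v - G2 p q v) m n c =
   mult_xy_pow sc N G1 m n c - mult_xy_pow sc N G2 m n c"
  unfolding mult_xy_pow_def by (simp add: scale_right_diff_distrib sum_subtractf)

lemma mult_scale: "mult_xy_pow sc N (\<lambda>p q v. sc k (G p q v)) m n c =
   sc k (mult_xy_pow sc N G m n c)"
  unfolding mult_xy_pow_def by (simp add: scale_sum_right mult_ac)

lemma mult_zero: "mult_xy_pow sc N (\<lambda>p q v. 0) m n c = 0"
  unfolding mult_xy_pow_def by simp

lemma mult_shift: "mult_xy_pow sc N (\<lambda>p q v. G (p - j) q v) m n c =
   mult_xy_pow sc N G (m - j) n c"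
  unfolding mult_xy_pow_def by (simp add: algebra_simps)

lemma mult_pascal: "mult_xy_pow sc (Suc N) G m n c =
   mult_xy_pow sc N G (m - 1) n c - mult_xy_pow sc N G m (n - 1) c"
proof -
  define g where "g k = G (m - int (Suc N) + int k) (n - int k) c" for k
  define A where "A N k = (of_nat (N choose k) * (-1) ^ k :: complex)" for N k
  have L: "mult_xy_pow sc (Suc N) G m n c = (\<Sum>k\<le>Suc N. sc (A (Suc N) k) (g k))"
    unfolding mult_alt g_def A_def ..
  have R1: "mult_xy_pow sc N G (m - 1) n c = (\<Sum>k\<le>Suc N. sc (A N k) (g k))"
    unfolding mult_alt g_def A_def by (simp add: algebra_simps)
  have R2: "mult_xy_pow sc N G m (n - 1) c = (\<Sum>k\<le>N. sc (A N k) (g (Suc k)))"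
    unfolding mult_alt g_def A_def by (simp add: algebra_simps)
  have AS: "A (Suc N) (Suc k) = A N (Suc k) - A N k" for k
    unfolding A_def by (simp add: algebra_simps)
  have "(\<Sum>k\<le>Suc N. sc (A (Suc N) k) (g k)) =
      sc (A (Suc N) 0) (g 0) + (\<Sum>k\<le>N. sc (A (Suc N) (Suc k)) (g (Suc k)))"
    by (rule sum.atMost_Suc_shift)
  also have "\<dots> = sc (A N 0) (g 0) + (\<Sum>k\<le>N. sc (A N (Suc k)) (g (Suc k)))
        - (\<Sum>k\<le>N. sc (A N k) (g (Suc k)))"
    by (simp only: AS scale_left_diff_distrib sum_subtractf add_diff_eq) (simp add: A_def)
  also have "sc (A N 0) (g 0) + (\<Sum>k\<le>N. sc (A N (Suc k)) (g (Suc k))) =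
      (\<Sum>k\<le>Suc N. sc (A N k) (g k))"
    by (rule sum.atMost_Suc_shift[symmetric])
  finally show ?thesis using L R1 R2 by simp
qed

lemma mult_mono: assumes "\<forall>m n c. mult_xy_pow sc N G m n c = 0"
  shows "\<forall>m n c. mult_xy_pow sc (N + d) G m n c = 0"
proof (induction d)
  case 0 then show ?case using assms by simp
next
  case (Suc d) then show ?case by (simp add: mult_pascal)
qed

lemma mult_deriv: "mult_xy_pow sc (Suc N) (\<lambda>p q v. sc (of_int p) (G p q v)) m n c =
   sc (of_int m) (mult_xy_pow sc (Suc N) G m n c)
   - sc (of_nat (Suc N)) (mult_xy_pow sc N G (m - 1) n c)"
proof -
  define g where "g k = G (m - int (Suc N) + int k) (n - int k) c" for k
  define A where "A N k = (of_nat (N choose k) * (-1) ^ k :: complex)" for N k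
  have L: "mult_xy_pow sc (Suc N) (\<lambda>p q v. sc (of_int p) (G p q v)) m n c
     = (\<Sum>k\<le>Suc N. sc (A (Suc N) k * (of_int m - (of_nat (Suc N) - of_nat k))) (g k))"
    unfolding mult_alt g_def A_def by (simp add: algebra_simps)
  have R1: "mult_xy_pow sc N G (m - 1) n c = (\<Sum>k\<le>Suc N. sc (A N k) (g k))"
    unfolding mult_alt g_def A_def by (simp add: algebra_simps)
  have R0: "mult_xy_pow sc (Suc N) G m n c = (\<Sum>k\<le>Suc N. sc (A (Suc N) k) (g k))"
    unfolding mult_alt g_def A_def ..
  have key: "A (Suc N) k * (of_nat (Suc N) - of_nat k) = of_nat (Suc N) * A N k" if "k \<le> Suc N" for k
  proof -
    have "(Suc N - k) * (Suc N choose k) = Suc N * (N choose k)"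
      using binomial_absorb_comp[of "Suc N" k] by simp
    then have "(of_nat (Suc N) - of_nat k) * (of_nat (Suc N choose k) :: complex) = of_nat (Suc N) * of_nat (N choose k)"
      using that by (metis of_nat_diff of_nat_mult)
    then show ?thesis unfolding A_def by (simp add: algebra_simps)
  qed
  have "(\<Sum>k\<le>Suc N. sc (A (Suc N) k * (of_int m - (of_nat (Suc N) - of_nat k))) (g k))
     = (\<Sum>k\<le>Suc N. sc (of_int m) (sc (A (Suc N) k) (g k)) - sc (of_nat (Suc N)) (sc (A N k) (g k)))"
  proof (rule sum.cong[OF refl])
    fix k assume "k \<in> {..Suc N}"
    then have k: "k \<le> Suc N" by simp
    have "A (Suc N) k * (of_int m - (of_nat (Suc N) - of_nat k)) = A (Suc N) k * of_int m - A (Suc N) k * (of_nat (Suc N) - of_nat k)"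
      by (rule right_diff_distrib)
    also have "\<dots> = of_int m * A (Suc N) k - of_nat (Suc N) * A N k" using key[OF k] by (simp add: mult.commute)
    finally show "sc (A (Suc N) k * (of_int m - (of_nat (Suc N) - of_nat k))) (g k) =
       sc (of_int m) (sc (A (Suc N) k) (g k)) - sc (of_nat (Suc N)) (sc (A N k) (g k))"
      by (simp add: scale_left_diff_distrib)
  qed
  then show ?thesis unfolding L R0 R1 by (simp only: sum_subtractf scale_sum_right)
qed

end


locale VA =
  fixes sc :: "complex \<Rightarrow> 'v::ab_group_add \<Rightarrow> 'v"
    and P :: "'v \<Rightarrow> 'v" and Yc :: "'v \<Rightarrow> int \<Rightarrow> 'v \<Rightarrow> 'v" and vac :: 'v and T :: "'v \<Rightarrow> 'v"
  assumes va: "vertex_algebra sc P Yc vac T"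
begin

sublocale cvs sc by (rule cvs.intro) (use va in \<open>simp add: vertex_algebra_def\<close>)

lemma Ylin: "Vector_Spaces.linear sc sc (Yc a n)" using va by (simp add: vertex_algebra_def)
lemma Yalin: "Vector_Spaces.linear sc sc (\<lambda>a. Yc a n b)" using va by (simp add: vertex_algebra_def)
lemma Plin: "Vector_Spaces.linear sc sc P" using va by (simp add: vertex_algebra_def)
lemma PP: "P (P v) = v" using va by (simp add: vertex_algebra_def)
lemma Tlin: "Vector_Spaces.linear sc sc T" using va by (simp add: vertex_algebra_def)
lemma Tvac: "T vac = 0" using va by (simp add: vertex_algebra_def)
lemma Yvac: "Yc vac n b = (if n = 0 then b else 0)" using va by (simp add: vertex_algebra_def)
lemma Yneg: "n < 0 \<Longrightarrow> Yc a n vac = 0" using va by (simp add: vertex_algebra_def)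
lemma Y0: "Yc a 0 vac = a" using va by (simp add: vertex_algebra_def)
lemma Ytrans: "sop_comm T (Yc a n) b = sc (of_int (n + 1)) (Yc a (n + 1) b)"
  using va by (simp add: vertex_algebra_def)
lemma locf: "local_fields sc P Yc" using va by (simp add: vertex_algebra_def)

lemma Y_add: "Yc a n (x + y) = Yc a n x + Yc a n y" by (rule lin_add[OF Ylin])
lemma Y_scale: "Yc a n (sc k x) = sc k (Yc a n x)" by (rule lin_scale[OF Ylin])
lemma Y_0: "Yc a n 0 = 0" by (rule lin_0[OF Ylin])
lemma Y_diff: "Yc a n (x - y) = Yc a n x - Yc a n y" by (rule lin_diff[OF Ylin])
lemma Y_neg: "Yc a n (- x) = - Yc a n x" by (rule lin_neg[OF Ylin])
lemma Y_sum: "Yc a n (sum g A) = (\<Sum>i\<in>A. Yc a n (g i))" by (rule lin_sum[OF Ylin])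
lemma Ya_add: "Yc (x + y) n b = Yc x n b + Yc y n b" using lin_add[OF Yalin] .
lemma Ya_scale: "Yc (sc k x) n b = sc k (Yc x n b)" using lin_scale[OF Yalin] .
lemma Ya_0: "Yc 0 n b = 0" using lin_0[OF Yalin] .
lemma Ya_diff: "Yc (x - y) n b = Yc x n b - Yc y n b" using lin_diff[OF Yalin] .
lemma Ya_neg: "Yc (- x) n b = - Yc x n b" using lin_neg[OF Yalin] .

lemma eT: "T (Yc a p vac) = sc (of_int (p + 1)) (Yc a (p + 1) vac)"
  using Ytrans[of a p vac] by (simp add: sop_comm_def Tvac Y_0)

lemma fcomm_zero: "fcomm sc Yc b s (\<lambda>p v. 0) = (\<lambda>p q v. 0)"
  by (simp add: fcomm_def Y_0)
lemma fcomm_add: "fcomm sc Yc b s (\<lambda>p v. F p v + G p v) = (\<lambda>p q v. fcomm sc Yc b s F p q v + fcomm sc Yc b s G p q v)"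
  by (simp add: fcomm_def Y_add scale_right_distrib algebra_simps)
lemma fcomm_diff: "fcomm sc Yc b s (\<lambda>p v. F p v - G p v) = (\<lambda>p q v. fcomm sc Yc b s F p q v - fcomm sc Yc b s G p q v)"
  by (simp add: fcomm_def Y_diff scale_right_diff_distrib algebra_simps)
lemma fcomm_scale: "fcomm sc Yc b s (\<lambda>p v. sc k (F p v)) = (\<lambda>p q v. sc k (fcomm sc Yc b s F p q v))"
  by (simp add: fcomm_def Y_scale scale_right_diff_distrib mult.commute)
lemma fcomm_deriv: "fcomm sc Yc b s (\<lambda>p v. sc (of_int p) (F p v)) = (\<lambda>p q v. sc (of_int p) (fcomm sc Yc b s F p q v))"
  by (simp add: fcomm_def Y_scale scale_right_diff_distrib mult.commute)
lemma fcomm_shift: "fcomm sc Yc b s (\<lambda>p v. F (p - j) v) = (\<lambda>p q v. fcomm sc Yc b s F (p - j) q v)"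
  by (simp add: fcomm_def)

lemma good_zero: "good sc Yc b s (\<lambda>p v. 0)"
  unfolding good_def fcomm_zero using mult_zero by blast

lemma good_add: assumes "good sc Yc b s F" "good sc Yc b s G"
  shows "good sc Yc b s (\<lambda>p v. F p v + G p v)"
proof -
  obtain N1 where 1: "\<forall>m n c. mult_xy_pow sc N1 (fcomm sc Yc b s F) m n c = 0" using assms(1) good_def by blast
  obtain N2 where 2: "\<forall>m n c. mult_xy_pow sc N2 (fcomm sc Yc b s G) m n c = 0" using assms(2) good_def by blast
  have "\<forall>m n c. mult_xy_pow sc (N1 + N2) (fcomm sc Yc b s F) m n c = 0" using mult_mono[OF 1] by blast
  moreover have "\<forall>m n c. mult_xy_pow sc (N1 + N2) (fcomm sc Yc b s G) m n c = 0"
    using mult_mono[OF 2, of N1] by (simp add: add.commute)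
  ultimately show ?thesis unfolding good_def fcomm_add mult_add by (intro exI[of _ "N1+N2"]) auto
qed

lemma good_diff: assumes "good sc Yc b s F" "good sc Yc b s G"
  shows "good sc Yc b s (\<lambda>p v. F p v - G p v)"
proof -
  obtain N1 where 1: "\<forall>m n c. mult_xy_pow sc N1 (fcomm sc Yc b s F) m n c = 0" using assms(1) good_def by blast
  obtain N2 where 2: "\<forall>m n c. mult_xy_pow sc N2 (fcomm sc Yc b s G) m n c = 0" using assms(2) good_def by blast
  have "\<forall>m n c. mult_xy_pow sc (N1 + N2) (fcomm sc Yc b s F) m n c = 0" using mult_mono[OF 1] by blast
  moreover have "\<forall>m n c. mult_xy_pow sc (N1 + N2) (fcomm sc Yc b s G) m n c = 0"
    using mult_mono[OF 2, of N1] by (simp add: add.commute)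
  ultimately show ?thesis unfolding good_def fcomm_diff mult_diff by (intro exI[of _ "N1+N2"]) auto
qed

lemma good_scale: assumes "good sc Yc b s F" shows "good sc Yc b s (\<lambda>p v. sc k (F p v))"
  using assms unfolding good_def fcomm_scale mult_scale by auto

lemma good_shift: assumes "good sc Yc b s F" shows "good sc Yc b s (\<lambda>p v. F (p - j) v)"
  using assms unfolding good_def fcomm_shift by (auto simp: mult_shift[of _ "fcomm sc Yc b s F" j])

lemma good_deriv: assumes "good sc Yc b s F" shows "good sc Yc b s (\<lambda>p v. sc (of_int p) (F p v))"
proof -
  obtain N where 1: "\<forall>m n c. mult_xy_pow sc N (fcomm sc Yc b s F) m n c = 0" using assms good_def by blast
  have 2: "\<forall>m n c. mult_xy_pow sc (Suc N) (fcomm sc Yc b s F) m n c = 0" using mult_mono[OF 1, of 1] by (simp add: One_nat_def)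
  show ?thesis unfolding good_def fcomm_deriv
    by (rule exI[of _ "Suc N"]) (simp add: mult_deriv 1 2)
qed

lemma good_cong: assumes "good sc Yc b s F" "\<And>p v. F p v = G p v" shows "good sc Yc b s G"
proof -
  have "F = G" using assms(2) by (intro ext)
  then show ?thesis using assms(1) by simp
qed

lemma good_sum: assumes "finite I" "\<And>i. i \<in> I \<Longrightarrow> good sc Yc b s (F i)"
  shows "good sc Yc b s (\<lambda>p v. \<Sum>i\<in>I. F i p v)"
  using assms
proof (induction I rule: finite_induct)
  case empty then show ?case by (simp add: good_zero)
next
  case (insert x I)
  have "good sc Yc b s (\<lambda>p v. F x p v + (\<Sum>i\<in>I. F i p v))"
    by (rule good_add) (use insert in auto)
  then show ?case by (rule good_cong) (use insert in simp)
qed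

lemma uniq: assumes "good sc Yc b s F" "\<And>p. F p vac = 0" "\<And>p. F p 0 = 0"
  shows "F p b = 0"
proof -
  obtain N where 1: "\<forall>m n c. mult_xy_pow sc N (fcomm sc Yc b s F) m n c = 0" using assms good_def by blast
  have "mult_xy_pow sc N (fcomm sc Yc b s F) (p + int N) 0 vac =
     (\<Sum>k\<le>N. if k = 0 then F p b else 0)"
    unfolding mult_alt
  proof (rule sum.cong[OF refl])
    fix k assume "k \<in> {..N}"
    show "sc (of_nat (N choose k) * (- 1) ^ k) (fcomm sc Yc b s F (p + int N - int N + int k) (0 - int k) vac)
      = (if k = 0 then F p b else 0)"
    proof (cases "k = 0")
      case True then show ?thesis by (simp add: fcomm_def assms(2) Y_0 Y0)
    next
      case False then show ?thesis by (simp add: fcomm_def assms(2,3) Y_0 Yneg)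
    qed
  qed
  then show ?thesis using 1 by simp
qed

lemma homog_decomp: obtains v0 v1 where "v = v0 + v1" "homog P v0 False" "homog P v1 True"
proof -
  define v0 where "v0 = sc (1/2) (v + P v)"
  define v1 where "v1 = sc (1/2) (v - P v)"
  have "v0 + v1 = sc (1/2) (v + P v + (v - P v))" unfolding v0_def v1_def by (rule scale_right_distrib[symmetric])
  also have "\<dots> = sc (1/2) (sc 2 v)" by (simp add: scale_left_distrib[of 1 1, simplified])
  finally have 1: "v = v0 + v1" by simp
  have 2: "homog P v0 False" unfolding homog_def v0_def
    by (simp add: lin_scale[OF Plin] lin_add[OF Plin] PP add.commute)
  have 3: "homog P v1 True" unfolding homog_def v1_def
    by (simp add: lin_scale[OF Plin] lin_diff[OF Plin] PP flip: scale_minus_right)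
  show ?thesis using 1 2 3 that by blast
qed

lemma homog_op: assumes "even_op P X" "Vector_Spaces.linear sc sc X" "homog P a pa"
  shows "homog P (X a) pa"
  using assms unfolding homog_def even_op_def by (metis lin_neg)

lemma good_Y: assumes "homog P a pa" "homog P b pb" shows "good sc Yc b (super_sign pa pb) (Yc a)"
  using locf assms unfolding local_fields_def good_def fcomm_def by blast

end


locale VAC = VA sc P Yc vac "Tr 1"
  for sc :: "complex \<Rightarrow> 'v::ab_group_add \<Rightarrow> 'v" and P Yc vac and Tr :: "nat \<Rightarrow> 'v \<Rightarrow> 'v" +
  fixes D :: nat and H :: "'v \<Rightarrow> 'v" and Om :: "nat \<Rightarrow> nat \<Rightarrow> 'v \<Rightarrow> 'v" and C :: "nat \<Rightarrow> 'v \<Rightarrow> 'v"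
  assumes cd: "cD_action sc P D Tr H Om C" and D1: "D \<ge> 1"
begin

lemmas cd3 = cd[unfolded cD_action_def, THEN conjunct2, THEN conjunct2, THEN conjunct1]
lemmas cd4 = cd[unfolded cD_action_def, THEN conjunct2, THEN conjunct2, THEN conjunct2, THEN conjunct1]

lemma Hlin: "Vector_Spaces.linear sc sc H" using cd unfolding cD_action_def by blast
lemma Heven: "even_op P H" using cd unfolding cD_action_def by blast
lemma Trlin: "\<alpha> \<in> {1..D} \<Longrightarrow> Vector_Spaces.linear sc sc (Tr \<alpha>)" using cd3 by blast
lemma Treven: "\<alpha> \<in> {1..D} \<Longrightarrow> even_op P (Tr \<alpha>)" using cd3 by blast
lemma Clin: "\<alpha> \<in> {1..D} \<Longrightarrow> Vector_Spaces.linear sc sc (C \<alpha>)" using cd3 by blast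
lemma Ceven: "\<alpha> \<in> {1..D} \<Longrightarrow> even_op P (C \<alpha>)" using cd3 by blast
lemma Omlin: "\<alpha> \<in> {1..D} \<Longrightarrow> \<beta> \<in> {1..D} \<Longrightarrow> Vector_Spaces.linear sc sc (Om \<alpha> \<beta>)"
  using cd4 by blast
lemma Omeven: "\<alpha> \<in> {1..D} \<Longrightarrow> \<beta> \<in> {1..D} \<Longrightarrow> even_op P (Om \<alpha> \<beta>)"
  using cd4 by blast
lemma Omanti: "\<alpha> \<in> {1..D} \<Longrightarrow> \<beta> \<in> {1..D} \<Longrightarrow> Om \<alpha> \<beta> v = - Om \<beta> \<alpha> v"
  using cd4 by blast

lemmas cd5 = cd[unfolded cD_action_def, THEN conjunct2, THEN conjunct2, THEN conjunct2, THEN conjunct2, THEN conjunct1]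
lemmas cd6 = cd[unfolded cD_action_def, THEN conjunct2, THEN conjunct2, THEN conjunct2, THEN conjunct2, THEN conjunct2, THEN conjunct1]

lemma rel_TrTr: "\<alpha> \<in> {1..D} \<Longrightarrow> \<beta> \<in> {1..D} \<Longrightarrow> sop_comm (Tr \<alpha>) (Tr \<beta>) v = 0"
  using cd5 by blast
lemma rel_OmTr: "\<alpha> \<in> {1..D} \<Longrightarrow> \<beta> \<in> {1..D} \<Longrightarrow> \<gamma> \<in> {1..D} \<Longrightarrow>
  sop_comm (Om \<alpha> \<beta>) (Tr \<gamma>) v = (if \<alpha> = \<gamma> then Tr \<beta> v else 0) - (if \<beta> = \<gamma> then Tr \<alpha> v else 0)"
  using cd5 by blast
lemma rel_TrC: "\<alpha> \<in> {1..D} \<Longrightarrow> \<beta> \<in> {1..D} \<Longrightarrow>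
  sop_comm (Tr \<alpha>) (C \<beta>) v = sc 2 ((if \<alpha> = \<beta> then H v else 0) - Om \<alpha> \<beta> v)"
  using cd5 by blast
lemma rel_HTr: "\<alpha> \<in> {1..D} \<Longrightarrow> sop_comm H (Tr \<alpha>) v = Tr \<alpha> v"
  using cd6 by blast
lemma sub2: "\<alpha> \<in> {2..D} \<Longrightarrow> \<alpha> \<in> {1..D}" by simp

lemma one_in: "1 \<in> {1..D}" using D1 by simp

lemma Om11: "Om 1 1 v = 0"
proof -
  have "Om 1 1 v = - Om 1 1 v" using Omanti[OF one_in one_in] .
  then have "sc 2 (Om 1 1 v) = 0" by (simp add: scale_left_distrib[of 1 1, simplified] eq_neg_iff_add_eq_0)
  then show ?thesis by simp
qed

lemma TrTr1: "\<alpha> \<in> {1..D} \<Longrightarrow> Tr \<alpha> (Tr 1 v) = Tr 1 (Tr \<alpha> v)"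
  using rel_TrTr[OF _ one_in, of \<alpha> v] one_in unfolding sop_comm_def by (simp add: algebra_simps)

lemma OmTr1: "\<alpha> \<in> {2..D} \<Longrightarrow> \<beta> \<in> {2..D} \<Longrightarrow> Om \<alpha> \<beta> (Tr 1 v) = Tr 1 (Om \<alpha> \<beta> v)"
proof -
  assume a: "\<alpha> \<in> {2..D}" and b: "\<beta> \<in> {2..D}"
  then have "sop_comm (Om \<alpha> \<beta>) (Tr 1) v = (if \<alpha> = 1 then Tr \<beta> v else 0) - (if \<beta> = 1 then Tr \<alpha> v else 0)"
    using rel_OmTr[OF sub2[OF a] sub2[OF b] one_in] by blast
  then show ?thesis using a b by (simp add: sop_comm_def)
qed

lemma Om1Tr1: "\<alpha> \<in> {2..D} \<Longrightarrow> Om 1 \<alpha> (Tr 1 v) = Tr 1 (Om 1 \<alpha> v) + Tr \<alpha> v"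
proof -
  assume a: "\<alpha> \<in> {2..D}"
  then have "sop_comm (Om 1 \<alpha>) (Tr 1) v = (if 1 = (1::nat) then Tr \<alpha> v else 0) - (if \<alpha> = 1 then Tr 1 v else 0)"
    using rel_OmTr[OF one_in sub2[OF a] one_in] by blast
  then show ?thesis using a by (simp add: sop_comm_def algebra_simps)
qed

lemma HTr1: "H (Tr 1 v) = Tr 1 (H v) + Tr 1 v"
proof -
  have "sop_comm H (Tr 1) v = Tr 1 v" using rel_HTr[OF one_in] by blast
  then show ?thesis by (simp add: sop_comm_def algebra_simps)
qed

lemma CTr1: "\<alpha> \<in> {2..D} \<Longrightarrow> C \<alpha> (Tr 1 v) = Tr 1 (C \<alpha> v) + sc 2 (Om 1 \<alpha> v)"
proof -
  assume a: "\<alpha> \<in> {2..D}"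
  then have "sop_comm (Tr 1) (C \<alpha>) v = sc 2 ((if 1 = \<alpha> then H v else 0) - Om 1 \<alpha> v)"
    using rel_TrC[OF one_in sub2[OF a]] by blast
  then show ?thesis using a by (simp add: sop_comm_def algebra_simps)
qed

lemma C1Tr1: "C 1 (Tr 1 v) = Tr 1 (C 1 v) - sc 2 (H v)"
proof -
  have "sop_comm (Tr 1) (C 1) v = sc 2 ((if 1 = (1::nat) then H v else 0) - Om 1 1 v)"
    using rel_TrC[OF one_in one_in] by simp
  then have "sop_comm (Tr 1) (C 1) v = sc 2 (H v)" unfolding Om11 by simp
  then show ?thesis by (simp add: sop_comm_def algebra_simps)
qed

end


context VAC begin

lemma vac_ind:
  assumes neg: "\<And>p. p < 0 \<Longrightarrow> A p = B p" and z: "A 0 = B 0"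
    and st: "\<And>p. p \<ge> 0 \<Longrightarrow> A p = B p \<Longrightarrow> sc (of_int (p+1)) (A (p+1)) = sc (of_int (p+1)) (B (p+1))"
  shows "A (p::int) = B p"
proof (cases "p < 0")
  case True then show ?thesis using neg by simp
next
  case False
  then have "0 \<le> p" by simp
  then show ?thesis
  proof (induction p rule: int_ge_induct)
    case base then show ?case using z .
  next
    case (step i)
    have "sc (of_int (i+1)) (A (i+1)) = sc (of_int (i+1)) (B (i+1))" using st step by simp
    moreover have "i + 1 \<noteq> 0" using step(1) by simp
    then have "(of_int (i+1) :: complex) \<noteq> 0" by (metis of_int_eq_0_iff)
    ultimately show ?case by simp
  qed
qed

lemma vac_comm:
  assumes Xl: "Vector_Spaces.linear sc sc X" and Xc: "\<And>v. X (Tr 1 v) = Tr 1 (X v)"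
  shows "X (Yc a p vac) = Yc (X a) p vac"
proof (rule vac_ind[where A = "\<lambda>p. X (Yc a p vac)" and B = "\<lambda>p. Yc (X a) p vac"])
  fix p :: int assume "p < 0" then show "X (Yc a p vac) = Yc (X a) p vac" by (simp add: Yneg lin_0[OF Xl])
next
  show "X (Yc a 0 vac) = Yc (X a) 0 vac" by (simp add: Y0)
next
  fix p :: int assume "0 \<le> p" and IH: "X (Yc a p vac) = Yc (X a) p vac"
  have "sc (of_int (p+1)) (X (Yc a (p+1) vac)) = X (Tr 1 (Yc a p vac))" by (simp add: eT lin_scale[OF Xl])
  also have "\<dots> = Tr 1 (Yc (X a) p vac)" using Xc IH by simp
  also have "\<dots> = sc (of_int (p+1)) (Yc (X a) (p+1) vac)" by (simp add: eT)
  finally show "sc (of_int (p+1)) (X (Yc a (p+1) vac)) = sc (of_int (p+1)) (Yc (X a) (p+1) vac)" .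
qed

lemma vac_H: "H (Yc a p vac) = Yc (H a) p vac + sc (of_int p) (Yc a p vac)"
proof (rule vac_ind[where A = "\<lambda>p. H (Yc a p vac)" and B = "\<lambda>p. Yc (H a) p vac + sc (of_int p) (Yc a p vac)"])
  fix p :: int assume "p < 0" then show "H (Yc a p vac) = Yc (H a) p vac + sc (of_int p) (Yc a p vac)" by (simp add: Yneg lin_0[OF Hlin])
next
  show "H (Yc a 0 vac) = Yc (H a) 0 vac + sc (of_int 0) (Yc a 0 vac)" by (simp add: Y0)
next
  fix p :: int assume "0 \<le> p" and IH: "H (Yc a p vac) = Yc (H a) p vac + sc (of_int p) (Yc a p vac)"
  have "sc (of_int (p+1)) (H (Yc a (p+1) vac)) = H (Tr 1 (Yc a p vac))" by (simp add: eT lin_scale[OF Hlin])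
  also have "\<dots> = Tr 1 (H (Yc a p vac)) + Tr 1 (Yc a p vac)" by (rule HTr1)
  also have "\<dots> = Tr 1 (Yc (H a) p vac + sc (of_int p) (Yc a p vac)) + Tr 1 (Yc a p vac)" using IH by simp
  also have "\<dots> = sc (of_int (p+1)) (Yc (H a) (p+1) vac + sc (of_int (p+1)) (Yc a (p+1) vac))"
    by (simp add: eT lin_add[OF Tlin] lin_scale[OF Tlin] scale_right_distrib scale_left_distrib algebra_simps sc2 sc2r sc2l)
  finally show "sc (of_int (p+1)) (H (Yc a (p+1) vac)) = sc (of_int (p+1)) (Yc (H a) (p+1) vac + sc (of_int (p+1)) (Yc a (p+1) vac))" .
qed

lemma vac_Tr: "\<alpha> \<in> {1..D} \<Longrightarrow> Tr \<alpha> (Yc a p vac) = Yc (Tr \<alpha> a) p vac"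
  by (rule vac_comm[OF Trlin TrTr1]) auto

lemma vac_Om: "\<alpha> \<in> {2..D} \<Longrightarrow> \<beta> \<in> {2..D} \<Longrightarrow> Om \<alpha> \<beta> (Yc a p vac) = Yc (Om \<alpha> \<beta> a) p vac"
  by (rule vac_comm[OF Omlin[OF sub2 sub2] OmTr1])

lemma vac_Om1: assumes a2: "\<alpha> \<in> {2..D}"
  shows "Om 1 \<alpha> (Yc a p vac) = Yc (Om 1 \<alpha> a) p vac + Yc (Tr \<alpha> a) (p - 1) vac"
proof (rule vac_ind[where A = "\<lambda>p. Om 1 \<alpha> (Yc a p vac)" and B = "\<lambda>p. Yc (Om 1 \<alpha> a) p vac + Yc (Tr \<alpha> a) (p - 1) vac"])
  have L: "Vector_Spaces.linear sc sc (Om 1 \<alpha>)" using Omlin[OF one_in sub2[OF a2]] .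
  fix p :: int assume "p < 0" then show "Om 1 \<alpha> (Yc a p vac) = Yc (Om 1 \<alpha> a) p vac + Yc (Tr \<alpha> a) (p - 1) vac"
    by (simp add: Yneg lin_0[OF L])
next
  show "Om 1 \<alpha> (Yc a 0 vac) = Yc (Om 1 \<alpha> a) 0 vac + Yc (Tr \<alpha> a) (0 - 1) vac" by (simp add: Y0 Yneg)
next
  have L: "Vector_Spaces.linear sc sc (Om 1 \<alpha>)" using Omlin[OF one_in sub2[OF a2]] .
  fix p :: int assume "0 \<le> p" and IH: "Om 1 \<alpha> (Yc a p vac) = Yc (Om 1 \<alpha> a) p vac + Yc (Tr \<alpha> a) (p - 1) vac"
  have "sc (of_int (p+1)) (Om 1 \<alpha> (Yc a (p+1) vac)) = Om 1 \<alpha> (Tr 1 (Yc a p vac))" by (simp add: eT lin_scale[OF L])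
  also have "\<dots> = Tr 1 (Om 1 \<alpha> (Yc a p vac)) + Tr \<alpha> (Yc a p vac)" by (rule Om1Tr1[OF a2])
  also have "\<dots> = Tr 1 (Yc (Om 1 \<alpha> a) p vac + Yc (Tr \<alpha> a) (p - 1) vac) + Yc (Tr \<alpha> a) p vac"
    using IH vac_Tr[OF sub2[OF a2]] by simp
  also have "\<dots> = sc (of_int (p+1)) (Yc (Om 1 \<alpha> a) (p+1) vac + Yc (Tr \<alpha> a) (p + 1 - 1) vac)"
    by (simp add: eT lin_add[OF Tlin] lin_scale[OF Tlin] scale_right_distrib scale_left_distrib algebra_simps sc2 sc2r sc2l)
  finally show "sc (of_int (p+1)) (Om 1 \<alpha> (Yc a (p+1) vac)) = sc (of_int (p+1)) (Yc (Om 1 \<alpha> a) (p+1) vac + Yc (Tr \<alpha> a) (p + 1 - 1) vac)" .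
qed

lemma vac_C: assumes a2: "\<alpha> \<in> {2..D}"
  shows "C \<alpha> (Yc a p vac) = Yc (C \<alpha> a) p vac + sc 2 (Yc (Om 1 \<alpha> a) (p - 1) vac) + Yc (Tr \<alpha> a) (p - 2) vac"
proof (rule vac_ind[where A = "\<lambda>p. C \<alpha> (Yc a p vac)" and B = "\<lambda>p. Yc (C \<alpha> a) p vac + sc 2 (Yc (Om 1 \<alpha> a) (p - 1) vac) + Yc (Tr \<alpha> a) (p - 2) vac"])
  have L: "Vector_Spaces.linear sc sc (C \<alpha>)" using Clin[OF sub2[OF a2]] .
  fix p :: int assume "p < 0" then show "C \<alpha> (Yc a p vac) = Yc (C \<alpha> a) p vac + sc 2 (Yc (Om 1 \<alpha> a) (p - 1) vac) + Yc (Tr \<alpha> a) (p - 2) vac"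
    by (simp add: Yneg lin_0[OF L])
next
  show "C \<alpha> (Yc a 0 vac) = Yc (C \<alpha> a) 0 vac + sc 2 (Yc (Om 1 \<alpha> a) (0 - 1) vac) + Yc (Tr \<alpha> a) (0 - 2) vac" by (simp add: Y0 Yneg)
next
  have L: "Vector_Spaces.linear sc sc (C \<alpha>)" using Clin[OF sub2[OF a2]] .
  fix p :: int assume "0 \<le> p" and IH: "C \<alpha> (Yc a p vac) = Yc (C \<alpha> a) p vac + sc 2 (Yc (Om 1 \<alpha> a) (p - 1) vac) + Yc (Tr \<alpha> a) (p - 2) vac"
  have "sc (of_int (p+1)) (C \<alpha> (Yc a (p+1) vac)) = C \<alpha> (Tr 1 (Yc a p vac))" by (simp add: eT lin_scale[OF L])
  also have "\<dots> = Tr 1 (C \<alpha> (Yc a p vac)) + sc 2 (Om 1 \<alpha> (Yc a p vac))" by (rule CTr1[OF a2])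
  also have "\<dots> = Tr 1 (Yc (C \<alpha> a) p vac + sc 2 (Yc (Om 1 \<alpha> a) (p - 1) vac) + Yc (Tr \<alpha> a) (p - 2) vac)
       + sc 2 (Yc (Om 1 \<alpha> a) p vac + Yc (Tr \<alpha> a) (p - 1) vac)"
    using IH vac_Om1[OF a2] by simp
  also have "\<dots> = sc (of_int (p+1)) (Yc (C \<alpha> a) (p+1) vac + sc 2 (Yc (Om 1 \<alpha> a) (p + 1 - 1) vac) + Yc (Tr \<alpha> a) (p + 1 - 2) vac)"
  proof -
    have e1: "Tr 1 (Yc x (p - 1) vac) = sc (of_int p) (Yc x p vac)" for x using eT[of x "p - 1"] by simp
    have e2: "Tr 1 (Yc x (p - 2) vac) = sc (of_int p - 1) (Yc x (p - 1) vac)" for x using eT[of x "p - 2"] by simp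
    show ?thesis
      by (simp add: eT e1 e2 lin_add[OF Tlin] lin_scale[OF Tlin] scale_right_distrib scale_left_distrib algebra_simps sc2 sc2r sc2l)
  qed
  finally show "sc (of_int (p+1)) (C \<alpha> (Yc a (p+1) vac)) = sc (of_int (p+1)) (Yc (C \<alpha> a) (p+1) vac + sc 2 (Yc (Om 1 \<alpha> a) (p + 1 - 1) vac) + Yc (Tr \<alpha> a) (p + 1 - 2) vac)" .
qed

lemma vac_C1:
  shows "C 1 (Yc a p vac) = Yc (C 1 a) p vac - sc 2 (Yc (H a) (p - 1) vac) - sc (of_int (p - 1)) (Yc a (p - 1) vac)"
proof (rule vac_ind[where A = "\<lambda>p. C 1 (Yc a p vac)" and B = "\<lambda>p. Yc (C 1 a) p vac - sc 2 (Yc (H a) (p - 1) vac) - sc (of_int (p - 1)) (Yc a (p - 1) vac)"])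
  have L: "Vector_Spaces.linear sc sc (C 1)" using Clin[OF one_in] .
  fix p :: int assume "p < 0" then show "C 1 (Yc a p vac) = Yc (C 1 a) p vac - sc 2 (Yc (H a) (p - 1) vac) - sc (of_int (p - 1)) (Yc a (p - 1) vac)"
    by (simp add: Yneg lin_0[OF L])
next
  show "C 1 (Yc a 0 vac) = Yc (C 1 a) 0 vac - sc 2 (Yc (H a) (0 - 1) vac) - sc (of_int (0 - 1)) (Yc a (0 - 1) vac)" by (simp add: Y0 Yneg)
next
  have L: "Vector_Spaces.linear sc sc (C 1)" using Clin[OF one_in] .
  fix p :: int assume "0 \<le> p" and IH: "C 1 (Yc a p vac) = Yc (C 1 a) p vac - sc 2 (Yc (H a) (p - 1) vac) - sc (of_int (p - 1)) (Yc a (p - 1) vac)"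
  have "sc (of_int (p+1)) (C 1 (Yc a (p+1) vac)) = C 1 (Tr 1 (Yc a p vac))" by (simp add: eT lin_scale[OF L])
  also have "\<dots> = Tr 1 (C 1 (Yc a p vac)) - sc 2 (H (Yc a p vac))" by (rule C1Tr1)
  also have "\<dots> = Tr 1 (Yc (C 1 a) p vac - sc 2 (Yc (H a) (p - 1) vac) - sc (of_int (p - 1)) (Yc a (p - 1) vac))
       - sc 2 (Yc (H a) p vac + sc (of_int p) (Yc a p vac))"
    using IH vac_H by simp
  also have "\<dots> = sc (of_int (p+1)) (Yc (C 1 a) (p+1) vac - sc 2 (Yc (H a) (p + 1 - 1) vac) - sc (of_int (p + 1 - 1)) (Yc a (p + 1 - 1) vac))"
  proof -
    have e1: "Tr 1 (Yc x (p - 1) vac) = sc (of_int p) (Yc x p vac)" for x using eT[of x "p - 1"] by simp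
    show ?thesis
      by (simp add: eT e1 lin_add[OF Tlin] lin_diff[OF Tlin] lin_scale[OF Tlin] algebra_simps sc2 sc2r sc2l)
  qed
  finally show "sc (of_int (p+1)) (C 1 (Yc a (p+1) vac)) = sc (of_int (p+1)) (Yc (C 1 a) (p+1) vac - sc 2 (Yc (H a) (p + 1 - 1) vac) - sc (of_int (p + 1 - 1)) (Yc a (p + 1 - 1) vac))" .
qed

end


context VAC begin

lemma gYX: assumes "even_op P X" "Vector_Spaces.linear sc sc X" "homog P a pa" "homog P b pb"
  shows "good sc Yc b (super_sign pa pb) (Yc (X a))"
  by (rule good_Y[OF homog_op[OF assms(1-3)] assms(4)])

lemma gRT: assumes "\<alpha> \<in> {1..D}" "homog P a pa" "homog P b pb"
  shows "good sc Yc b (super_sign pa pb) (\<lambda>p v. Yc (Tr \<alpha> a) p v)"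
  using gYX[OF Treven[OF assms(1)] Trlin[OF assms(1)] assms(2,3)] by simp

lemma gROm: assumes "\<alpha> \<in> {1..D}" "\<beta> \<in> {1..D}" "homog P a pa" "homog P b pb"
  shows "good sc Yc b (super_sign pa pb) (\<lambda>p v. Yc (Om \<alpha> \<beta> a) p v)"
  using gYX[OF Omeven[OF assms(1,2)] Omlin[OF assms(1,2)] assms(3,4)] by simp

lemma gRH: assumes "homog P a pa" "homog P b pb"
  shows "good sc Yc b (super_sign pa pb) (\<lambda>p v. Yc (H a) p v + sc (of_int p) (Yc a p v))"
  using good_add[OF gYX[OF Heven Hlin assms] good_deriv[OF good_Y[OF assms]]] by simp

lemma gROm1: assumes "\<alpha> \<in> {2..D}" "homog P a pa" "homog P b pb"
  shows "good sc Yc b (super_sign pa pb) (\<lambda>p v. Yc (Om 1 \<alpha> a) p v + Yc (Tr \<alpha> a) (p - 1) v)"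
  using good_add[OF gYX[OF Omeven[OF one_in sub2[OF assms(1)]] Omlin[OF one_in sub2[OF assms(1)]] assms(2,3)]
      good_shift[OF gYX[OF Treven[OF sub2[OF assms(1)]] Trlin[OF sub2[OF assms(1)]] assms(2,3)], of 1]] by simp

lemma gRC: assumes "\<alpha> \<in> {2..D}" "homog P a pa" "homog P b pb"
  shows "good sc Yc b (super_sign pa pb) (\<lambda>p v. Yc (C \<alpha> a) p v + sc 2 (Yc (Om 1 \<alpha> a) (p - 1) v) + Yc (Tr \<alpha> a) (p - 2) v)"
  using good_add[OF good_add[OF gYX[OF Ceven[OF sub2[OF assms(1)]] Clin[OF sub2[OF assms(1)]] assms(2,3)]
      good_scale[OF good_shift[OF gYX[OF Omeven[OF one_in sub2[OF assms(1)]] Omlin[OF one_in sub2[OF assms(1)]] assms(2,3)], of 1], of 2]]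
      good_shift[OF gYX[OF Treven[OF sub2[OF assms(1)]] Trlin[OF sub2[OF assms(1)]] assms(2,3)], of 2]] by simp

lemma gRC1: assumes "homog P a pa" "homog P b pb"
  shows "good sc Yc b (super_sign pa pb) (\<lambda>p v. Yc (C 1 a) p v - sc 2 (Yc (H a) (p - 1) v) - sc (of_int (p - 1)) (Yc a (p - 1) v))"
  using good_diff[OF good_diff[OF gYX[OF Ceven[OF one_in] Clin[OF one_in] assms]
      good_scale[OF good_shift[OF gYX[OF Heven Hlin assms], of 1], of 2]]
      good_shift[OF good_deriv[OF good_Y[OF assms]], of 1]] by simp

lemma gRT1: assumes "homog P a pa" "homog P b pb"
  shows "good sc Yc b (super_sign pa pb) (\<lambda>p v. sc (of_int (p + 1)) (Yc a (p + 1) v))"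
  using good_shift[OF good_deriv[OF good_Y[OF assms]], of "-1"] by simp

lemma local_good: assumes "local_op sc P Yc X" "homog P a pa" "homog P b pb"
  shows "good sc Yc b (super_sign pa pb) (\<lambda>p. sop_comm X (Yc a p))"
  using assms unfolding local_op_def good_def fcomm_def by blast

lemma good_local: assumes "\<And>a b pa pb. homog P a pa \<Longrightarrow> homog P b pb \<Longrightarrow> good sc Yc b (super_sign pa pb) (\<lambda>p. sop_comm X (Yc a p))"
  shows "local_op sc P Yc X"
  using assms unfolding local_op_def good_def fcomm_def by blast

lemma fwd:
  assumes Xl: "Vector_Spaces.linear sc sc X" and loc: "local_op sc P Yc X" and Xv: "X vac = 0"
    and Rg: "\<And>a b pa pb. homog P a pa \<Longrightarrow> homog P b pb \<Longrightarrow> good sc Yc b (super_sign pa pb) (R a)"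
    and Rv: "\<And>a p. X (Yc a p vac) = R a p vac"
    and Rb: "\<And>a p x y. R a p (x + y) = R a p x + R a p y"
    and Ra: "\<And>a1 a2 p y. R (a1 + a2) p y = R a1 p y + R a2 p y"
  shows "sop_comm X (Yc a p) b = R a p b"
proof -
  have R0: "R a p 0 = 0" for a p using Rb[of a p 0 0] by simp
  have hom: "sop_comm X (Yc a p) b = R a p b" if ha: "homog P a pa" and hb: "homog P b pb" for a b pa pb
  proof -
    have g: "good sc Yc b (super_sign pa pb) (\<lambda>p v. sop_comm X (Yc a p) v - R a p v)"
      using good_diff[OF local_good[OF loc ha hb] Rg[OF ha hb]] by simp
    have "(\<lambda>p v. sop_comm X (Yc a p) v - R a p v) p b = 0"
      by (rule uniq[OF g]) (simp_all add: sop_comm_def Xv Y_0 Rv R0 lin_0[OF Xl])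
    then show ?thesis by simp
  qed
  have Sa: "sop_comm X (Yc (a1 + a2) p) y = sop_comm X (Yc a1 p) y + sop_comm X (Yc a2 p) y" for a1 a2 y
    by (simp add: sop_comm_def Ya_add lin_add[OF Xl])
  have Sb: "sop_comm X (Yc a p) (x + y) = sop_comm X (Yc a p) x + sop_comm X (Yc a p) y" for a x y
    by (simp add: sop_comm_def Y_add lin_add[OF Xl])
  have hb: "sop_comm X (Yc a p) y = R a p y" if ha: "homog P a pa" for a pa y
  proof -
    obtain y0 y1 where y: "y = y0 + y1" "homog P y0 False" "homog P y1 True" by (rule homog_decomp)
    show ?thesis using hom[OF ha y(2)] hom[OF ha y(3)] by (simp add: y(1) Sb Rb)
  qed
  obtain a0 a1 where a: "a = a0 + a1" "homog P a0 False" "homog P a1 True" by (rule homog_decomp)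
  show ?thesis using hb[OF a(2)] hb[OF a(3)] by (simp add: a(1) Sa Ra)
qed

lemma sum_delta_sc: "finite A \<Longrightarrow> a \<in> A \<Longrightarrow> (\<Sum>x\<in>A. sc (if x = a then 1 else 0) (f x)) = f a"
proof -
  assume "finite A" "a \<in> A"
  have "(\<Sum>x\<in>A. sc (if x = a then 1 else 0) (f x)) = (\<Sum>x\<in>A. if x = a then f x else 0)"
    by (rule sum.cong) auto
  also have "\<dots> = f a" using \<open>finite A\<close> \<open>a \<in> A\<close> by (simp add: sum.delta)
  finally show ?thesis .
qed

lemma mem_Tr: "\<alpha> \<in> {1..D} \<Longrightarrow> Tr \<alpha> \<in> cD_ops sc D Tr H Om C"
  unfolding cD_ops_def
  by (rule CollectI, rule exI[of _ "\<lambda>\<beta>. if \<beta> = \<alpha> then 1 else 0"], rule exI[of _ 0],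
      rule exI[of _ "\<lambda>_ _. 0"], rule exI[of _ "\<lambda>_. 0"]) (simp add: sum_delta_sc)

lemma mem_C: "\<alpha> \<in> {1..D} \<Longrightarrow> C \<alpha> \<in> cD_ops sc D Tr H Om C"
  unfolding cD_ops_def
  by (rule CollectI, rule exI[of _ "\<lambda>_. 0"], rule exI[of _ 0],
      rule exI[of _ "\<lambda>_ _. 0"], rule exI[of _ "\<lambda>\<beta>. if \<beta> = \<alpha> then 1 else 0"]) (simp add: sum_delta_sc)

lemma mem_H: "H \<in> cD_ops sc D Tr H Om C"
  unfolding cD_ops_def
  by (rule CollectI, rule exI[of _ "\<lambda>_. 0"], rule exI[of _ 1],
      rule exI[of _ "\<lambda>_ _. 0"], rule exI[of _ "\<lambda>_. 0"]) simp

lemma mem_Om: assumes "\<alpha> \<in> {1..D}" "\<beta> \<in> {1..D}" shows "Om \<alpha> \<beta> \<in> cD_ops sc D Tr H Om C"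
  unfolding cD_ops_def
proof (rule CollectI, rule exI[of _ "\<lambda>_. 0"], rule exI[of _ 0],
      rule exI[of _ "\<lambda>\<gamma> \<delta>. if \<gamma> = \<alpha> then (if \<delta> = \<beta> then 1 else 0) else 0"], rule exI[of _ "\<lambda>_. 0"], rule allI)
  fix v
  have "(\<Sum>\<gamma>\<in>{1..D}. \<Sum>\<delta>\<in>{1..D}. sc (if \<gamma> = \<alpha> then (if \<delta> = \<beta> then 1 else 0) else 0) (Om \<gamma> \<delta> v))
     = (\<Sum>\<gamma>\<in>{1..D}. sc (if \<gamma> = \<alpha> then 1 else 0) (Om \<gamma> \<beta> v))"
    by (rule sum.cong) (auto simp: sum_delta_sc[OF _ assms(2)])
  also have "\<dots> = Om \<alpha> \<beta> v" using assms by (simp add: sum_delta_sc)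
  finally show "Om \<alpha> \<beta> v = (\<Sum>\<alpha>\<in>{1..D}. sc 0 (Tr \<alpha> v)) + sc 0 (H v) +
          (\<Sum>\<gamma>\<in>{1..D}. \<Sum>\<delta>\<in>{1..D}. sc (if \<gamma> = \<alpha> then (if \<delta> = \<beta> then 1 else 0) else 0) (Om \<gamma> \<delta> v)) +
          (\<Sum>\<alpha>\<in>{1..D}. sc 0 (C \<alpha> v))" by simp
qed

lemma comm_comb:
  assumes X: "\<And>v. X v = (\<Sum>\<alpha>\<in>{1..D}. sc (t \<alpha>) (Tr \<alpha> v)) + sc h (H v)
        + (\<Sum>\<alpha>\<in>{1..D}. \<Sum>\<beta>\<in>{1..D}. sc (w \<alpha> \<beta>) (Om \<alpha> \<beta> v))
        + (\<Sum>\<alpha>\<in>{1..D}. sc (c \<alpha>) (C \<alpha> v))"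
  shows "sop_comm X (Yc a p) v = (\<Sum>\<alpha>\<in>{1..D}. sc (t \<alpha>) (sop_comm (Tr \<alpha>) (Yc a p) v)) + sc h (sop_comm H (Yc a p) v)
        + (\<Sum>\<alpha>\<in>{1..D}. \<Sum>\<beta>\<in>{1..D}. sc (w \<alpha> \<beta>) (sop_comm (Om \<alpha> \<beta>) (Yc a p) v))
        + (\<Sum>\<alpha>\<in>{1..D}. sc (c \<alpha>) (sop_comm (C \<alpha>) (Yc a p) v))"
  by (simp add: X sop_comm_def Y_add Y_scale Y_sum scale_right_diff_distrib sum_subtractf algebra_simps)

lemma bwd_all:
  assumes REL: "\<forall>a n b.
        sop_comm H (Yc a n) b = Yc (H a) n b + sc (of_int n) (Yc a n b) \<and>
        sop_comm (C 1) (Yc a n) b =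
          Yc (C 1 a) n b - sc 2 (Yc (H a) (n - 1) b) - sc (of_int (n - 1)) (Yc a (n - 1) b) \<and>
        (\<forall>\<alpha>\<in>{2..D}. \<forall>\<beta>\<in>{2..D}.
          sop_comm (Tr \<alpha>) (Yc a n) b = Yc (Tr \<alpha> a) n b \<and>
          sop_comm (Om \<alpha> \<beta>) (Yc a n) b = Yc (Om \<alpha> \<beta> a) n b \<and>
          sop_comm (Om 1 \<alpha>) (Yc a n) b = Yc (Om 1 \<alpha> a) n b + Yc (Tr \<alpha> a) (n - 1) b \<and>
          sop_comm (C \<alpha>) (Yc a n) b =
            Yc (C \<alpha> a) n b + sc 2 (Yc (Om 1 \<alpha> a) (n - 1) b) + Yc (Tr \<alpha> a) (n - 2) b)"
  shows "(\<forall>X\<in>cD_ops sc D Tr H Om C. local_op sc P Yc X) \<and> (\<forall>X\<in>cD_ops sc D Tr H Om C. X vac = 0)"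
proof -
  have relH: "sop_comm H (Yc a n) b = Yc (H a) n b + sc (of_int n) (Yc a n b)" for a n b using REL by blast
  have relC1: "sop_comm (C 1) (Yc a n) b =
          Yc (C 1 a) n b - sc 2 (Yc (H a) (n - 1) b) - sc (of_int (n - 1)) (Yc a (n - 1) b)" for a n b using REL by blast
  have relT: "sop_comm (Tr \<alpha>) (Yc a n) b = Yc (Tr \<alpha> a) n b" if "\<alpha> \<in> {2..D}" for a n b \<alpha> using REL that by blast
  have relOm: "sop_comm (Om \<alpha> \<beta>) (Yc a n) b = Yc (Om \<alpha> \<beta> a) n b" if "\<alpha> \<in> {2..D}" "\<beta> \<in> {2..D}" for a n b \<alpha> \<beta> using REL that by blast
  have relOm1: "sop_comm (Om 1 \<alpha>) (Yc a n) b = Yc (Om 1 \<alpha> a) n b + Yc (Tr \<alpha> a) (n - 1) b" if "\<alpha> \<in> {2..D}" for a n b \<alpha> using REL that by blast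
  have relC: "sop_comm (C \<alpha>) (Yc a n) b =
            Yc (C \<alpha> a) n b + sc 2 (Yc (Om 1 \<alpha> a) (n - 1) b) + Yc (Tr \<alpha> a) (n - 2) b" if "\<alpha> \<in> {2..D}" for a n b \<alpha> using REL that by blast
  have cases1: "\<alpha> = 1 \<or> \<alpha> \<in> {2..D}" if "\<alpha> \<in> {1..D}" for \<alpha> :: nat using that by auto
  have vH: "H vac = 0" using relH[of vac 0 vac] by (simp add: sop_comm_def Yvac Y0)
  have vT: "Tr \<alpha> vac = 0" if "\<alpha> \<in> {1..D}" for \<alpha>
    using cases1[OF that] proof
    assume "\<alpha> = 1" then show ?thesis by (simp add: Tvac)
  next
    assume "\<alpha> \<in> {2..D}" then show ?thesis using relT[of \<alpha> vac 0 vac] by (simp add: sop_comm_def Yvac Y0)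
  qed
  have vC: "C \<alpha> vac = 0" if "\<alpha> \<in> {1..D}" for \<alpha>
    using cases1[OF that] proof
    assume "\<alpha> = 1" then show ?thesis using relC1[of vac 0 vac] by (simp add: sop_comm_def Yvac Y0 Yneg)
  next
    assume "\<alpha> \<in> {2..D}" then show ?thesis using relC[of \<alpha> vac 0 vac] by (simp add: sop_comm_def Yvac Y0 Yneg)
  qed
  have vOm1: "Om 1 \<alpha> vac = 0" if "\<alpha> \<in> {1..D}" for \<alpha>
    using cases1[OF that] proof
    assume "\<alpha> = 1" then show ?thesis by (simp add: Om11)
  next
    assume "\<alpha> \<in> {2..D}" then show ?thesis using relOm1[of \<alpha> vac 0 vac] by (simp add: sop_comm_def Yvac Y0 Yneg)
  qed
  have vOm: "Om \<alpha> \<beta> vac = 0" if "\<alpha> \<in> {1..D}" "\<beta> \<in> {1..D}" for \<alpha> \<beta>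
  proof (cases "\<alpha> = 1")
    case True then show ?thesis using vOm1[OF that(2)] by simp
  next
    case False
    then have a2: "\<alpha> \<in> {2..D}" using that by auto
    show ?thesis
    proof (cases "\<beta> = 1")
      case True then show ?thesis using vOm1[OF that(1)] Omanti[OF that, of vac] by simp
    next
      case False
      then have "\<beta> \<in> {2..D}" using that by auto
      then show ?thesis using relOm[OF a2, of \<beta> vac 0 vac] by (simp add: sop_comm_def Yvac Y0)
    qed
  qed
  have V0: "\<forall>X\<in>cD_ops sc D Tr H Om C. X vac = 0"
  proof
    fix X assume "X \<in> cD_ops sc D Tr H Om C"
    then obtain t h w c where X: "\<And>v. X v = (\<Sum>\<alpha>\<in>{1..D}. sc (t \<alpha>) (Tr \<alpha> v)) + sc h (H v)
        + (\<Sum>\<alpha>\<in>{1..D}. \<Sum>\<beta>\<in>{1..D}. sc (w \<alpha> \<beta>) (Om \<alpha> \<beta> v))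
        + (\<Sum>\<alpha>\<in>{1..D}. sc (c \<alpha>) (C \<alpha> v))" unfolding cD_ops_def by blast
    show "X vac = 0" by (simp add: X vH vT vC vOm)
  qed
  have L: "local_op sc P Yc X" if "X \<in> cD_ops sc D Tr H Om C" for X
  proof (rule good_local)
    fix a b pa pb assume ha: "homog P a pa" and hb: "homog P b pb"
    let ?s = "super_sign pa pb"
    have gT: "good sc Yc b ?s (\<lambda>p. sop_comm (Tr \<alpha>) (Yc a p))" if "\<alpha> \<in> {1..D}" for \<alpha>
      using cases1[OF that] proof
      assume "\<alpha> = 1" then show ?thesis by (intro good_cong[OF gRT1[OF ha hb]]) (simp add: Ytrans)
    next
      assume a2: "\<alpha> \<in> {2..D}" show ?thesis by (rule good_cong[OF gRT[OF sub2[OF a2] ha hb]]) (simp add: relT[OF a2])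
    qed
    have gH: "good sc Yc b ?s (\<lambda>p. sop_comm H (Yc a p))"
      by (rule good_cong[OF gRH[OF ha hb]]) (simp add: relH)
    have gC: "good sc Yc b ?s (\<lambda>p. sop_comm (C \<alpha>) (Yc a p))" if "\<alpha> \<in> {1..D}" for \<alpha>
      using cases1[OF that] proof
      assume "\<alpha> = 1" then show ?thesis by (intro good_cong[OF gRC1[OF ha hb]]) (simp add: relC1)
    next
      assume a2: "\<alpha> \<in> {2..D}" show ?thesis by (rule good_cong[OF gRC[OF a2 ha hb]]) (simp add: relC[OF a2])
    qed
    have gOm1: "good sc Yc b ?s (\<lambda>p. sop_comm (Om 1 \<alpha>) (Yc a p))" if "\<alpha> \<in> {1..D}" for \<alpha>
      using cases1[OF that] proof
      assume "\<alpha> = 1" then show ?thesis by (intro good_cong[OF good_zero]) (simp add: sop_comm_def Om11 Y_0)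
    next
      assume a2: "\<alpha> \<in> {2..D}" show ?thesis by (rule good_cong[OF gROm1[OF a2 ha hb]]) (simp add: relOm1[OF a2])
    qed
    have gOm: "good sc Yc b ?s (\<lambda>p. sop_comm (Om \<alpha> \<beta>) (Yc a p))" if ab: "\<alpha> \<in> {1..D}" "\<beta> \<in> {1..D}" for \<alpha> \<beta>
    proof (cases "\<alpha> = 1")
      case True then show ?thesis using gOm1[OF ab(2)] by simp
    next
      case False
      then have a2: "\<alpha> \<in> {2..D}" using ab by auto
      show ?thesis
      proof (cases "\<beta> = 1")
        case True
        show ?thesis
          by (rule good_cong[OF good_scale[OF gOm1[OF ab(1)], of "-1"]])
             (simp add: True sop_comm_def Omanti[OF ab(1) one_in] Y_neg)
      next
        case False
        then have b2: "\<beta> \<in> {2..D}" using ab by auto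
        show ?thesis by (rule good_cong[OF gROm[OF ab ha hb]]) (simp add: relOm[OF a2 b2])
      qed
    qed
    from that obtain t h w c where X: "\<And>v. X v = (\<Sum>\<alpha>\<in>{1..D}. sc (t \<alpha>) (Tr \<alpha> v)) + sc h (H v)
        + (\<Sum>\<alpha>\<in>{1..D}. \<Sum>\<beta>\<in>{1..D}. sc (w \<alpha> \<beta>) (Om \<alpha> \<beta> v))
        + (\<Sum>\<alpha>\<in>{1..D}. sc (c \<alpha>) (C \<alpha> v))" unfolding cD_ops_def by blast
    have g1: "good sc Yc b ?s (\<lambda>p v. \<Sum>\<alpha>\<in>{1..D}. sc (t \<alpha>) (sop_comm (Tr \<alpha>) (Yc a p) v))"
      by (rule good_sum) (auto intro!: good_scale gT)
    have g2: "good sc Yc b ?s (\<lambda>p v. sc h (sop_comm H (Yc a p) v))"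
      by (rule good_scale[OF gH])
    have g3: "good sc Yc b ?s (\<lambda>p v. \<Sum>\<alpha>\<in>{1..D}. \<Sum>\<beta>\<in>{1..D}. sc (w \<alpha> \<beta>) (sop_comm (Om \<alpha> \<beta>) (Yc a p) v))"
      by (rule good_sum) (auto intro!: good_sum good_scale gOm)
    have g4: "good sc Yc b ?s (\<lambda>p v. \<Sum>\<alpha>\<in>{1..D}. sc (c \<alpha>) (sop_comm (C \<alpha>) (Yc a p) v))"
      by (rule good_sum) (auto intro!: good_scale gC)
    show "good sc Yc b ?s (\<lambda>p. sop_comm X (Yc a p))"
      by (rule good_cong[OF good_add[OF good_add[OF good_add[OF g1 g2] g3] g4]]) (simp add: comm_comb[OF X])
  qed
  show ?thesis using L V0 by blast
qed

lemma fwd_all: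
  assumes LOC: "\<forall>X\<in>cD_ops sc D Tr H Om C. local_op sc P Yc X" and V0: "\<forall>X\<in>cD_ops sc D Tr H Om C. X vac = 0"
  shows "\<forall>a n b.
        sop_comm H (Yc a n) b = Yc (H a) n b + sc (of_int n) (Yc a n b) \<and>
        sop_comm (C 1) (Yc a n) b =
          Yc (C 1 a) n b - sc 2 (Yc (H a) (n - 1) b) - sc (of_int (n - 1)) (Yc a (n - 1) b) \<and>
        (\<forall>\<alpha>\<in>{2..D}. \<forall>\<beta>\<in>{2..D}.
          sop_comm (Tr \<alpha>) (Yc a n) b = Yc (Tr \<alpha> a) n b \<and>
          sop_comm (Om \<alpha> \<beta>) (Yc a n) b = Yc (Om \<alpha> \<beta> a) n b \<and>
          sop_comm (Om 1 \<alpha>) (Yc a n) b = Yc (Om 1 \<alpha> a) n b + Yc (Tr \<alpha> a) (n - 1) b \<and>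
          sop_comm (C \<alpha>) (Yc a n) b =
            Yc (C \<alpha> a) n b + sc 2 (Yc (Om 1 \<alpha> a) (n - 1) b) + Yc (Tr \<alpha> a) (n - 2) b)"
proof (intro allI conjI ballI)
  fix a n b
  show "sop_comm H (Yc a n) b = Yc (H a) n b + sc (of_int n) (Yc a n b)"
    by (rule fwd[OF Hlin LOC[rule_format, OF mem_H] V0[rule_format, OF mem_H], where R = "\<lambda>a p v. Yc (H a) p v + sc (of_int p) (Yc a p v)"])
       (simp_all add: gRH vac_H Y_add Ya_add lin_add[OF Hlin] scale_right_distrib algebra_simps)
  show "sop_comm (C 1) (Yc a n) b =
          Yc (C 1 a) n b - sc 2 (Yc (H a) (n - 1) b) - sc (of_int (n - 1)) (Yc a (n - 1) b)"
    by (rule fwd[OF Clin[OF one_in] LOC[rule_format, OF mem_C[OF one_in]] V0[rule_format, OF mem_C[OF one_in]],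
          where R = "\<lambda>a p v. Yc (C 1 a) p v - sc 2 (Yc (H a) (p - 1) v) - sc (of_int (p - 1)) (Yc a (p - 1) v)"])
       (erule (1) gRC1, simp_all add: vac_C1 Y_add Ya_add lin_add[OF Hlin] lin_add[OF Clin[OF one_in]] scale_right_distrib algebra_simps)
  fix \<alpha> \<beta> assume a2: "\<alpha> \<in> {2..D}" and b2: "\<beta> \<in> {2..D}"
  note a1 = sub2[OF a2] and b1 = sub2[OF b2]
  show "sop_comm (Tr \<alpha>) (Yc a n) b = Yc (Tr \<alpha> a) n b"
    by (rule fwd[OF Trlin[OF a1] LOC[rule_format, OF mem_Tr[OF a1]] V0[rule_format, OF mem_Tr[OF a1]],
          where R = "\<lambda>a p v. Yc (Tr \<alpha> a) p v"])
       (simp_all add: gRT[OF a1] vac_Tr[OF a1] Y_add Ya_add lin_add[OF Trlin[OF a1]])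
  show "sop_comm (Om \<alpha> \<beta>) (Yc a n) b = Yc (Om \<alpha> \<beta> a) n b"
    by (rule fwd[OF Omlin[OF a1 b1] LOC[rule_format, OF mem_Om[OF a1 b1]] V0[rule_format, OF mem_Om[OF a1 b1]],
          where R = "\<lambda>a p v. Yc (Om \<alpha> \<beta> a) p v"])
       (simp_all add: gROm[OF a1 b1] vac_Om[OF a2 b2] Y_add Ya_add lin_add[OF Omlin[OF a1 b1]])
  show "sop_comm (Om 1 \<alpha>) (Yc a n) b = Yc (Om 1 \<alpha> a) n b + Yc (Tr \<alpha> a) (n - 1) b"
    by (rule fwd[OF Omlin[OF one_in a1] LOC[rule_format, OF mem_Om[OF one_in a1]] V0[rule_format, OF mem_Om[OF one_in a1]],
          where R = "\<lambda>a p v. Yc (Om 1 \<alpha> a) p v + Yc (Tr \<alpha> a) (p - 1) v"])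
       (simp_all add: gROm1[OF a2] vac_Om1[OF a2] Y_add Ya_add lin_add[OF Omlin[OF one_in a1]] lin_add[OF Trlin[OF a1]] algebra_simps)
  show "sop_comm (C \<alpha>) (Yc a n) b =
            Yc (C \<alpha> a) n b + sc 2 (Yc (Om 1 \<alpha> a) (n - 1) b) + Yc (Tr \<alpha> a) (n - 2) b"
    by (rule fwd[OF Clin[OF a1] LOC[rule_format, OF mem_C[OF a1]] V0[rule_format, OF mem_C[OF a1]],
          where R = "\<lambda>a p v. Yc (C \<alpha> a) p v + sc 2 (Yc (Om 1 \<alpha> a) (p - 1) v) + Yc (Tr \<alpha> a) (p - 2) v"])
       (erule (1) gRC[OF a2], simp_all add: vac_C[OF a2] Y_add Ya_add lin_add[OF Clin[OF a1]] lin_add[OF Omlin[OF one_in a1]]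
          lin_add[OF Trlin[OF a1]] scale_right_distrib algebra_simps)
qed

end

theorem mainTheorem3:
  fixes sc :: "complex \<Rightarrow> 'v::ab_group_add \<Rightarrow> 'v"
    and P :: "'v \<Rightarrow> 'v" and Yc :: "'v \<Rightarrow> int \<Rightarrow> 'v \<Rightarrow> 'v" and vac :: 'v
    and D :: nat and Tr :: "nat \<Rightarrow> 'v \<Rightarrow> 'v" and H :: "'v \<Rightarrow> 'v"
    and Om :: "nat \<Rightarrow> nat \<Rightarrow> 'v \<Rightarrow> 'v" and C :: "nat \<Rightarrow> 'v \<Rightarrow> 'v"
  assumes "D \<ge> 1"
    and "vertex_algebra sc P Yc vac (Tr 1)"
    and "cD_action sc P D Tr H Om C"
  shows "((\<forall>X\<in>cD_ops sc D Tr H Om C. local_op sc P Yc X) \<and>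
          (\<forall>X\<in>cD_ops sc D Tr H Om C. X vac = 0))
     \<longleftrightarrow>
     (\<forall>a n b.
        sop_comm H (Yc a n) b = Yc (H a) n b + sc (of_int n) (Yc a n b) \<and>
        sop_comm (C 1) (Yc a n) b =
          Yc (C 1 a) n b - sc 2 (Yc (H a) (n - 1) b) - sc (of_int (n - 1)) (Yc a (n - 1) b) \<and>
        (\<forall>\<alpha>\<in>{2..D}. \<forall>\<beta>\<in>{2..D}.
          sop_comm (Tr \<alpha>) (Yc a n) b = Yc (Tr \<alpha> a) n b \<and>
          sop_comm (Om \<alpha> \<beta>) (Yc a n) b = Yc (Om \<alpha> \<beta> a) n b \<and>
          sop_comm (Om 1 \<alpha>) (Yc a n) b = Yc (Om 1 \<alpha> a) n b + Yc (Tr \<alpha> a) (n - 1) b \<and>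
          sop_comm (C \<alpha>) (Yc a n) b =
            Yc (C \<alpha> a) n b + sc 2 (Yc (Om 1 \<alpha> a) (n - 1) b) + Yc (Tr \<alpha> a) (n - 2) b))"
proof -
  interpret VAC sc P Yc vac Tr D H Om C
    by (rule VAC.intro, rule VA.intro, fact assms(2), rule VAC_axioms.intro, fact assms(3), fact assms(1))
  show ?thesis
    apply (rule iffI)
     apply (elim conjE)
     apply (rule fwd_all; assumption)
    apply (rule bwd_all; assumption)
    done
qed

end
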